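(* Let $n\ge2$ and let $f$ be a function from the set of Schubert problems for $GL_n$ (triples $(u,v,w)\in S_n^3$ with $l(u)+l(v)+l(w)=\binom n2$) to $\mathbb Z$ satisfying: (1) (descent-cycling invariance) for every triple $(u,v,w)\in S_n^3$ with $l(u)+l(v)+l(w)=\binom n2-1$ and every $i\in\{1,\dots,n-1\}$ with $u(i)<u(i+1)$, $v(i)<v(i+1)$, $w(i)<w(i+1)$, one has $f(us_i,v,w)=f(u,vs_i,w)=f(u,v,ws_i)$; (2) $f(u,v,w)=0$ whenever there is $i$ with $u(i)<u(i+1)$, $v(i)<v(i+1)$ and $w(i)<w(i+1)$; (3) $f(\mathrm{id},\mathrm{id},w_0)=1$. Then $f$ obeys Monk's rule: let $\pi\in S_n$, $i\in\{1,\dots,n-1\}$, and let $\tau\in S_n$ be defined by $\tau(m)=n+1-\pi(m)$. Let $\sigma$ be obtained from $\tau$ by swapping the entries in positions $j<k$, where $\tau(j)>\tau(k)$ and $l(\sigma)=l(\tau)-1$. Then $f(\pi,s_i,\sigma)=1$ if $j\le i<k$, and $f(\pi,s_i,\sigma)=0$ if $j,k\le i$ or $j,k\ge i+1$.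
   Context: Permutations are in one-line notation; $l$ is the number of inversions; $w_0=n\,n{-}1\cdots1$; $\mathrm{id}$ is the identity; $s_i$ is the transposition $i\leftrightarrow i+1$, and $us_i$ denotes $u$ with the entries in positions $i,i+1$ swapped. Note $(\pi,s_i,\sigma)$ is automatically a Schubert problem. *)

theory Defs
  imports "HOL-Combinatorics.Combinatorics"
begin

text \<open>Permutations of S_n are functions nat => nat permuting {1..n} (one-line notation u(i)).\<close>

definition len :: "nat \<Rightarrow> (nat \<Rightarrow> nat) \<Rightarrow> nat" where
  "len n u = card {(a, b). a \<in> {1..n} \<and> b \<in> {1..n} \<and> a < b \<and> u a > u b}"

definition longest :: "nat \<Rightarrow> nat \<Rightarrow> nat" where
  "longest n m = (if m \<in> {1..n} then n + 1 - m else m)"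

definition sref :: "nat \<Rightarrow> nat \<Rightarrow> nat" where
  "sref i = Transposition.transpose i (i + 1)"

definition schubert_problem :: "nat \<Rightarrow> (nat \<Rightarrow> nat) \<Rightarrow> (nat \<Rightarrow> nat) \<Rightarrow> (nat \<Rightarrow> nat) \<Rightarrow> bool" where
  "schubert_problem n u v w \<longleftrightarrow> u permutes {1..n} \<and> v permutes {1..n} \<and> w permutes {1..n}
     \<and> len n u + len n v + len n w = n choose 2"

end

theory Submission
  imports Defs
begin

definition Wp :: "nat \<Rightarrow> (nat \<Rightarrow> nat) \<Rightarrow> nat \<Rightarrow> nat" where
  "Wp n p = (\<lambda>m. if m \<in> {1..n} then n + 1 - p m else m)"

lemma sref_apply: "sref m x = (if x = m then m+1 else if x = m+1 then m else x)"
  by (simp add: sref_def transpose_def)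

lemma sref_sref[simp]: "sref m (sref m x) = x"
  by (simp add: sref_def)

lemma comp_sref_sref[simp]: "u \<circ> sref m \<circ> sref m = u"
  by (rule ext) simp

lemma sref_order: "a < b \<Longrightarrow> (a,b) \<noteq> (m, m+1) \<Longrightarrow> sref m a < sref m b"
  by (auto simp: sref_apply)

lemma sref_range: "1 \<le> m \<Longrightarrow> m < n \<Longrightarrow> (sref m x \<in> {1..n}) = (x \<in> {1..n})"
  by (auto simp: sref_apply)

lemma fin_inv: "finite {(a, b). a \<in> {1..n} \<and> b \<in> {1..(n::nat)} \<and> P a b}"
  by (rule finite_subset[of _ "{1..n}\<times>{1..n}"]) auto

lemma fin_inv2: "finite {(a, b). a \<in> {1..n} \<and> b \<in> {1..(n::nat)} \<and> a < b}"
  by (rule finite_subset[of _ "{1..n}\<times>{1..n}"]) auto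

lemma L1asc:
  assumes m: "1 \<le> m" "m < n" and asc: "\<tau> m < \<tau> (m+1)"
  shows "len n (\<tau> \<circ> sref m) = len n \<tau> + 1"
proof -
  let ?s = "sref m"
  let ?I = "{(a, b). a \<in> {1..n} \<and> b \<in> {1..n} \<and> a < b \<and> \<tau> a > \<tau> b}"
  let ?J = "{(a, b). a \<in> {1..n} \<and> b \<in> {1..n} \<and> a < b \<and> (\<tau> \<circ> ?s) a > (\<tau> \<circ> ?s) b}"
  define \<phi> where "\<phi> = (\<lambda>(a,b). (?s a, ?s b))"
  have fin: "finite ?I" by (rule fin_inv)
  have inj: "inj_on \<phi> ?I"
    unfolding inj_on_def \<phi>_def by (auto dest: arg_cong[where f="sref m"])
  have eq: "?J = insert (m, m+1) (\<phi> ` ?I)"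
  proof (rule set_eqI, rule iffI)
    fix x assume x: "x \<in> ?J"
    then obtain a b where ab: "x = (a,b)" by (cases x)
    show "x \<in> insert (m, m+1) (\<phi> ` ?I)"
    proof (cases "(a,b) = (m,m+1)")
      case True then show ?thesis using ab by simp
    next
      case False
      have "(?s a, ?s b) \<in> ?I" using x ab False m sref_order[of a b m] sref_range[OF m]
        by auto
      moreover have "x = \<phi> (?s a, ?s b)" using ab by (simp add: \<phi>_def)
      ultimately show ?thesis by blast
    qed
  next
    fix x assume x: "x \<in> insert (m, m+1) (\<phi> ` ?I)"
    show "x \<in> ?J"
    proof (cases "x = (m, m+1)")
      case True then show ?thesis using m asc by (auto simp: sref_apply)
    next
      case False
      then obtain a b where ab: "(a,b) \<in> ?I" "x = (?s a, ?s b)" using x by (auto simp: \<phi>_def)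
      have "(a,b) \<noteq> (m,m+1)" using ab asc by auto
      then show ?thesis using ab sref_order[of a b m] sref_range[OF m] by auto
    qed
  qed
  have nin: "(m, m+1) \<notin> \<phi> ` ?I"
  proof
    assume "(m, m+1) \<in> \<phi> ` ?I"
    then obtain x where x: "x \<in> ?I" "(m, m+1) = \<phi> x" by blast
    obtain a b where xab: "x = (a,b)" by (cases x)
    have ab: "(a,b) \<in> ?I" "?s a = m" "?s b = m+1" using x xab by (auto simp: \<phi>_def)
    then have "a = sref m m" "b = sref m (m+1)" by (metis sref_sref)+
    then show False using ab by (simp add: sref_apply)
  qed
  have "len n (\<tau> \<circ> sref m) = card ?J" unfolding len_def by simp
  also have "\<dots> = card (\<phi> ` ?I) + 1" using eq nin fin by simp
  also have "\<dots> = len n \<tau> + 1" using card_image[OF inj] unfolding len_def by simp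
  finally show ?thesis .
qed

lemma L1desc:
  assumes m: "1 \<le> m" "m < n" and desc: "\<tau> m > \<tau> (m+1)"
  shows "len n (\<tau> \<circ> sref m) + 1 = len n \<tau>"
proof -
  have "(\<tau> \<circ> sref m) m < (\<tau> \<circ> sref m) (m+1)" using desc by (simp add: sref_apply)
  from L1asc[OF m this] have "len n (\<tau> \<circ> sref m \<circ> sref m) = len n (\<tau> \<circ> sref m) + 1" .
  then show ?thesis by (simp only: comp_sref_sref)
qed

lemma len_id: "len n id = 0"
proof -
  have "len n id = card ({}::(nat\<times>nat) set)" unfolding len_def by (rule arg_cong[where f=card]) auto
  then show ?thesis by simp
qed

lemma len_sref: "1 \<le> m \<Longrightarrow> m < n \<Longrightarrow> len n (sref m) = 1"
  using L1asc[of m n id] len_id by simp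

lemma card_pairs: "card {(a, b). a \<in> {1..n} \<and> b \<in> {1..n} \<and> a < (b::nat)} = n choose 2"
proof (induction n)
  case 0 then show ?case by simp
next
  case (Suc n)
  have eq: "{(a, b). a \<in> {1..Suc n} \<and> b \<in> {1..Suc n} \<and> a < b}
      = {(a, b). a \<in> {1..n} \<and> b \<in> {1..n} \<and> a < b} \<union> (\<lambda>a. (a, Suc n)) ` {1..n}"
    by auto
  have "card ({(a, b). a \<in> {1..n} \<and> b \<in> {1..n} \<and> a < b} \<union> (\<lambda>a. (a, Suc n)) ` {1..n})
      = card {(a, b). a \<in> {1..n} \<and> b \<in> {1..n} \<and> a < b} + card ((\<lambda>a. (a, Suc n)) ` {1..n})"
    by (rule card_Un_disjoint) (rule fin_inv2, simp, auto)
  also have "card ((\<lambda>a. (a, Suc n)) ` {1..n}) = n" by (subst card_image) (auto simp: inj_on_def)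
  finally show ?case using eq Suc by (simp add: numeral_2_eq_2)
qed

lemma L3:
  assumes p: "p permutes {1..n}"
  shows "len n p + len n (Wp n p) = n choose 2"
proof -
  let ?I = "{(a, b). a \<in> {1..n} \<and> b \<in> {1..n} \<and> a < b \<and> p a > p b}"
  let ?J = "{(a, b). a \<in> {1..n} \<and> b \<in> {1..n} \<and> a < b \<and> Wp n p a > Wp n p b}"
  have r: "\<And>a. a \<in> {1..n} \<Longrightarrow> p a \<in> {1..n}" using p by (simp only: permutes_in_image[OF p])
  have inj: "\<And>a b. p a = p b \<Longrightarrow> a = b" using permutes_inj[OF p] by (auto simp: inj_def)
  have J: "?J = {(a, b). a \<in> {1..n} \<and> b \<in> {1..n} \<and> a < b \<and> p a < p b}"
  proof -
    have "\<And>a b. a \<in> {1..n} \<Longrightarrow> b \<in> {1..n} \<Longrightarrow> (Wp n p a > Wp n p b) = (p a < p b)"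
    proof -
      fix a b assume "a \<in> {1..n}" "b \<in> {1..n}"
      then have "p a \<in> {1..n}" "p b \<in> {1..n}" using r by auto
      then show "(Wp n p a > Wp n p b) = (p a < p b)" using \<open>a \<in> {1..n}\<close> \<open>b \<in> {1..n}\<close>
        by (auto simp: Wp_def)
    qed
    then show ?thesis by auto
  qed
  have un: "{(a, b). a \<in> {1..n} \<and> b \<in> {1..n} \<and> a < b} = ?I \<union> {(a, b). a \<in> {1..n} \<and> b \<in> {1..n} \<and> a < b \<and> p a < p b}"
    using inj by (auto simp: nat_neq_iff) (metis less_irrefl_nat nat_neq_iff)
  have "n choose 2 = card ?I + card {(a, b). a \<in> {1..n} \<and> b \<in> {1..n} \<and> a < b \<and> p a < p b}"
    unfolding card_pairs[symmetric] un
    by (rule card_Un_disjoint) (simp only: fin_inv, simp only: fin_inv, auto)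
  then show ?thesis unfolding len_def J by simp
qed


lemma Wp_in: "x \<in> {1..n} \<Longrightarrow> Wp n p x = n + 1 - p x"
  unfolding Wp_def by (simp only: if_True)
lemma Wp_out: "x \<notin> {1..n} \<Longrightarrow> Wp n p x = x"
  unfolding Wp_def by (simp only: if_False)
lemma longest_in: "x \<in> {1..n} \<Longrightarrow> longest n x = n + 1 - x"
  unfolding longest_def by (simp only: if_True)
lemma longest_out: "x \<notin> {1..n} \<Longrightarrow> longest n x = x"
  unfolding longest_def by (simp only: if_False)

lemma longest_perm: "longest n permutes {1..n}"
proof (rule bij_imp_permutes)
  have inv: "\<And>x. longest n (longest n x) = x"
  proof -
    fix x show "longest n (longest n x) = x"
    proof (cases "x \<in> {1..n}")
      case True
      then have "n + 1 - x \<in> {1..n}" by auto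
      then show ?thesis using True by (simp add: longest_in)
    next
      case False then show ?thesis by (simp add: longest_out)
    qed
  qed
  have img: "\<And>x. x \<in> {1..n} \<Longrightarrow> longest n x \<in> {1..n}" by (auto simp: longest_in)
  show "bij_betw (longest n) {1..n} {1..n}"
    by (rule bij_betw_byWitness[where f'="longest n"]) (simp_all only: inv img image_subsetI, simp_all)
  show "\<And>x. x \<notin> {1..n} \<Longrightarrow> longest n x = x" by (rule longest_out)
qed

lemma Wp_eq: assumes p: "p permutes {1..n}" shows "Wp n p = longest n \<circ> p"
proof (rule ext)
  fix x show "Wp n p x = (longest n \<circ> p) x"
  proof (cases "x \<in> {1..n}")
    case True
    then have "p x \<in> {1..n}" by (simp only: permutes_in_image[OF p])
    then show ?thesis using True by (simp add: Wp_in longest_in)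
  next
    case False
    then have "p x = x" using permutes_not_in[OF p] by simp
    then show ?thesis using False by (simp add: Wp_out longest_out)
  qed
qed

lemma Wp_perm: assumes "p permutes {1..n}" shows "Wp n p permutes {1..n}"
  unfolding Wp_eq[OF assms] by (rule permutes_compose[OF assms longest_perm])

lemma Wp_id: "Wp n id = longest n"
proof (rule ext)
  fix x show "Wp n id x = longest n x"
    by (cases "x \<in> {1..n}") (simp_all add: Wp_in Wp_out longest_in longest_out)
qed

lemma Wp_comp: assumes m: "1 \<le> m" "m < n" shows "Wp n (p \<circ> sref m) = Wp n p \<circ> sref m"
proof (rule ext)
  fix x show "Wp n (p \<circ> sref m) x = (Wp n p \<circ> sref m) x"
  proof (cases "x \<in> {1..n}")
    case True
    then have "sref m x \<in> {1..n}" using sref_range[OF m] by blast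
    then show ?thesis using True by (simp add: Wp_in)
  next
    case False
    then have "sref m x = x" using m by (auto simp: sref_apply)
    then show ?thesis using False by (simp add: Wp_out)
  qed
qed

lemma Wp_less: assumes p: "p permutes {1..n}" and a: "a \<in> {1..n}" and b: "b \<in> {1..n}"
  shows "(Wp n p a > Wp n p b) = (p a < p b)"
proof -
  have "p a \<in> {1..n}" "p b \<in> {1..n}" using a b by (simp_all only: permutes_in_image[OF p])
  then show ?thesis using a b by (auto simp: Wp_in)
qed

lemma perm_neq: "p permutes S \<Longrightarrow> a \<noteq> b \<Longrightarrow> p a \<noteq> p b"
  using permutes_inj by (metis injD)

lemma sref_perm: "1 \<le> m \<Longrightarrow> m < n \<Longrightarrow> sref m permutes {1..n}"
  unfolding sref_def by (rule permutes_swap_id) auto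

lemma L4:
  fixes n :: nat
  assumes p: "p permutes {1..n}" and asc: "\<And>m. 1 \<le> m \<Longrightarrow> m < n \<Longrightarrow> p m < p (m+1)"
  shows "p = id"
proof -
  have r: "\<And>a. a \<in> {1..n} \<Longrightarrow> p a \<in> {1..n}" by (simp only: permutes_in_image[OF p])
  have ge: "\<And>m. 1 \<le> m \<Longrightarrow> m \<le> n \<Longrightarrow> p m \<ge> m"
  proof -
    fix m show "1 \<le> m \<Longrightarrow> m \<le> n \<Longrightarrow> p m \<ge> m"
    proof (induction m)
      case 0 then show ?case by simp
    next
      case (Suc m)
      show ?case
      proof (cases "m = 0")
        case True then show ?thesis using r[of 1] Suc by auto
      next
        case False
        then have "p m \<ge> m" using Suc by auto
        moreover have "p m < p (m+1)" using asc[of m] False Suc by auto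
        ultimately show ?thesis by simp
      qed
    qed
  qed
  have le: "\<And>d. d < n \<Longrightarrow> p (n - d) \<le> n - d"
  proof -
    fix d show "d < n \<Longrightarrow> p (n - d) \<le> n - d"
    proof (induction d)
      case 0 then show ?case using r[of n] by auto
    next
      case (Suc d)
      have "p (n - Suc d) < p (n - Suc d + 1)" using asc[of "n - Suc d"] Suc by auto
      moreover have "n - Suc d + 1 = n - d" using Suc by auto
      ultimately show ?case using Suc by auto
    qed
  qed
  show ?thesis
  proof (rule ext)
    fix x show "p x = id x"
    proof (cases "x \<in> {1..n}")
      case True
      then have "p x \<ge> x" using ge by auto
      moreover have "p x \<le> x" using le[of "n - x"] True by auto
      ultimately show ?thesis by simp
    next
      case False then show ?thesis using permutes_not_in[OF p] by simp
    qed
  qed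
qed

lemma claimA:
  fixes f :: "(nat \<Rightarrow> nat) \<Rightarrow> (nat \<Rightarrow> nat) \<Rightarrow> (nat \<Rightarrow> nat) \<Rightarrow> int"
  assumes cyc: "\<And>u v w i. u permutes {1..n} \<Longrightarrow> v permutes {1..n} \<Longrightarrow> w permutes {1..n}
       \<Longrightarrow> len n u + len n v + len n w + 1 = n choose 2
       \<Longrightarrow> i \<in> {1..n-1} \<Longrightarrow> u i < u (i+1) \<Longrightarrow> v i < v (i+1) \<Longrightarrow> w i < w (i+1)
       \<Longrightarrow> f (u \<circ> sref i) v w = f u (v \<circ> sref i) w \<and> f u (v \<circ> sref i) w = f u v (w \<circ> sref i)"
    and norm: "f id id (longest n) = 1"
  shows "len n p = N \<Longrightarrow> p permutes {1..n} \<Longrightarrow> f p id (Wp n p) = 1"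
proof (induction N arbitrary: p)
  case 0
  have "p = id"
  proof (rule L4[OF 0(2)])
    fix m assume m: "1 \<le> m" "m < n"
    show "p m < p (m+1)"
    proof (rule ccontr)
      assume "\<not> p m < p (m+1)"
      then have "p m > p (m+1)" using perm_neq[OF 0(2), of m "m+1"] by auto
      then show False using L1desc[OF m, of p] 0(1) by simp
    qed
  qed
  then have "f p id (Wp n p) = f id id (longest n)" by (simp only: Wp_id)
  also have "\<dots> = 1" by (rule norm)
  finally show ?case .
next
  case (Suc N)
  have "p \<noteq> id" using Suc(2) len_id[of n] by (metis Zero_not_Suc)
  then obtain m where m: "1 \<le> m" "m < n" and d: "\<not> p m < p (m+1)" using L4[OF Suc(3)] by blast
  then have d: "p m > p (m+1)" using perm_neq[OF Suc(3), of m "m+1"] by auto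
  define q where "q = p \<circ> sref m"
  have qp: "q \<circ> sref m = p" unfolding q_def by simp
  have qperm: "q permutes {1..n}" unfolding q_def by (rule permutes_compose[OF sref_perm[OF m] Suc(3)])
  have lq: "len n q + 1 = len n p" unfolding q_def by (rule L1desc[OF m d])
  have "len n q = N" using lq Suc(2) by simp
  then have IH: "f q id (Wp n q) = 1" by (rule Suc(1)[OF _ qperm])
  have L3p: "len n p + len n (Wp n p) = n choose 2" by (rule L3[OF Suc(3)])
  have "f (q \<circ> sref m) id (Wp n p) = f q (id \<circ> sref m) (Wp n p) \<and> f q (id \<circ> sref m) (Wp n p) = f q id (Wp n p \<circ> sref m)"
  proof (rule cyc[OF qperm permutes_id Wp_perm[OF Suc(3)]])
    show "len n q + len n id + len n (Wp n p) + 1 = n choose 2" using lq L3p len_id by simp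
    show "m \<in> {1..n-1}" using m by auto
    show "q m < q (m+1)" using d by (simp add: q_def sref_apply)
    show "id m < id (m+1)" by simp
    show "Wp n p m < Wp n p (m+1)" using Wp_less[OF Suc(3), of "m+1" m] d m by auto
  qed
  moreover have "Wp n p \<circ> sref m = Wp n q" unfolding q_def by (rule Wp_comp[OF m, symmetric])
  ultimately show ?case using qp IH by metis
qed


lemma C1: "j + 1 < k \<Longrightarrow> \<tau> \<circ> transpose j k \<circ> sref j = \<tau> \<circ> sref j \<circ> transpose (j+1) k"
  by (rule ext) (simp add: sref_apply transpose_def)

lemma C2: "j + 1 < k \<Longrightarrow> \<tau> \<circ> transpose j k \<circ> sref (k-1) = \<tau> \<circ> sref (k-1) \<circ> transpose j (k-1)"
proof (rule ext)
  fix x assume jk: "j + 1 < k"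
  show "(\<tau> \<circ> transpose j k \<circ> sref (k-1)) x = (\<tau> \<circ> sref (k-1) \<circ> transpose j (k-1)) x"
  proof -
    have "(transpose j k \<circ> sref (k-1)) x = (sref (k-1) \<circ> transpose j (k-1)) x"
      using jk by (cases "x = j"; cases "x = k"; cases "x = k - 1") (simp_all add: sref_apply transpose_def)
    then show ?thesis by simp
  qed
qed

lemma C3: "j + 1 < k \<Longrightarrow> \<tau> \<circ> transpose j k = \<tau> \<circ> sref j \<circ> transpose (j+1) k \<circ> sref j"
  by (rule ext) (simp add: sref_apply transpose_def)

lemma L2:
  fixes n :: nat
  shows "\<forall>\<tau> j k. \<tau> permutes {1..n} \<longrightarrow> 1 \<le> j \<longrightarrow> j < k \<longrightarrow> k \<le> n \<longrightarrow> k - j = d \<longrightarrow> \<tau> j > \<tau> k \<longrightarrow>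
    len n (\<tau> \<circ> transpose j k) + 1 \<le> len n \<tau> \<and>
    ((\<exists>l. j < l \<and> l < k \<and> \<tau> k < \<tau> l \<and> \<tau> l < \<tau> j) \<longrightarrow> len n (\<tau> \<circ> transpose j k) + 3 \<le> len n \<tau>)"
proof (induction d)
  case 0 show ?case by auto
next
  case (Suc d)
  show ?case
  proof (intro allI impI)
    fix \<tau> j k assume tp: "\<tau> permutes {1..n}" and j: "1 \<le> j" and jk: "j < k" and kn: "k \<le> n"
      and dd: "k - j = Suc d" and tjk: "\<tau> j > \<tau> k"
    show "len n (\<tau> \<circ> transpose j k) + 1 \<le> len n \<tau> \<and>
    ((\<exists>l. j < l \<and> l < k \<and> \<tau> k < \<tau> l \<and> \<tau> l < \<tau> j) \<longrightarrow> len n (\<tau> \<circ> transpose j k) + 3 \<le> len n \<tau>)"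
    proof (cases "k = j+1")
      case True
      then have "transpose j k = sref j" by (simp add: sref_def)
      then have e: "len n (\<tau> \<circ> transpose j k) + 1 = len n \<tau>" using L1desc[of j n \<tau>] j kn tjk True by simp
      have "\<not>(\<exists>l. j < l \<and> l < k \<and> \<tau> k < \<tau> l \<and> \<tau> l < \<tau> j)" using True by auto
      then show ?thesis using e by simp
    next
      case False
      then have jk2: "j+1 < k" using jk by simp
      define \<rho> where "\<rho> = \<tau> \<circ> sref j"
      define \<mu> where "\<mu> = \<rho> \<circ> transpose (j+1) k"
      have m: "1 \<le> j" "j < n" using j jk kn by auto
      have \<rho>p: "\<rho> permutes {1..n}" unfolding \<rho>_def by (rule permutes_compose[OF sref_perm[OF m] tp])
      have \<rho>1: "\<rho> (j+1) = \<tau> j" "\<rho> k = \<tau> k" "\<rho> j = \<tau> (j+1)" using jk2 by (auto simp: \<rho>_def sref_apply)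
      have \<rho>2: "\<And>l. j+1 < l \<Longrightarrow> \<rho> l = \<tau> l" by (auto simp: \<rho>_def sref_apply)
      have IH: "len n \<mu> + 1 \<le> len n \<rho> \<and> ((\<exists>l. j+1<l \<and> l<k \<and> \<rho> k < \<rho> l \<and> \<rho> l < \<rho> (j+1)) \<longrightarrow> len n \<mu> + 3 \<le> len n \<rho>)"
      proof -
        have p1: "1 \<le> j+1" by simp
        have p5: "k - (j+1) = d" using dd by simp
        have p6: "\<rho> (j+1) > \<rho> k" using \<rho>1 tjk by simp
        show ?thesis unfolding \<mu>_def by (rule Suc.IH[rule_format, OF \<rho>p p1 jk2 kn p5 p6])
      qed
      have eq: "\<tau> \<circ> transpose j k = \<mu> \<circ> sref j" unfolding \<mu>_def \<rho>_def by (rule C3[OF jk2])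
      then have e: "len n (\<tau> \<circ> transpose j k) = len n (\<mu> \<circ> sref j)" by simp
      note IH1 = IH[THEN conjunct1]
      note IH2 = IH[THEN conjunct2, rule_format]
      have \<mu>j: "\<mu> j = \<tau> (j+1)" "\<mu> (j+1) = \<tau> k" using jk2 \<rho>1 by (auto simp: \<mu>_def)
      have ne1: "\<tau> (j+1) \<noteq> \<tau> j" "\<tau> (j+1) \<noteq> \<tau> k" using perm_neq[OF tp] jk2 by auto
      consider (A) "\<tau> j < \<tau> (j+1)" | (B) "\<tau> (j+1) < \<tau> k" | (C) "\<tau> k < \<tau> (j+1)" "\<tau> (j+1) < \<tau> j"
        using ne1 by linarith
      then show ?thesis
      proof cases
        case A
        have l\<rho>: "len n \<rho> = len n \<tau> + 1" unfolding \<rho>_def by (rule L1asc[OF m A])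
        have l\<mu>: "len n (\<mu> \<circ> sref j) + 1 = len n \<mu>" by (rule L1desc[OF m]) (use \<mu>j A tjk in simp)
        have "(\<exists>l. j < l \<and> l < k \<and> \<tau> k < \<tau> l \<and> \<tau> l < \<tau> j) \<Longrightarrow> (\<exists>l. j+1<l \<and> l<k \<and> \<rho> k < \<rho> l \<and> \<rho> l < \<rho> (j+1))"
        proof -
          assume "\<exists>l. j < l \<and> l < k \<and> \<tau> k < \<tau> l \<and> \<tau> l < \<tau> j"
          then obtain l where l: "j < l" "l < k" "\<tau> k < \<tau> l" "\<tau> l < \<tau> j" by blast
          then have "l \<noteq> j+1" using A by auto
          then show ?thesis using l \<rho>1 \<rho>2[of l] by (intro exI[of _ l]) auto
        qed
        note H = this
        show ?thesis
        proof (intro conjI impI)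
          show "len n (\<tau> \<circ> transpose j k) + 1 \<le> len n \<tau>" using IH1 l\<rho> l\<mu> e by linarith
          assume ex: "\<exists>l. j < l \<and> l < k \<and> \<tau> k < \<tau> l \<and> \<tau> l < \<tau> j"
          have "len n \<mu> + 3 \<le> len n \<rho>" by (rule IH2[OF H[OF ex]])
          then show "len n (\<tau> \<circ> transpose j k) + 3 \<le> len n \<tau>" using l\<rho> l\<mu> e by linarith
        qed
      next
        case B
        have l\<rho>: "len n \<rho> + 1 = len n \<tau>" unfolding \<rho>_def by (rule L1desc[OF m]) (use B tjk in simp)
        have l\<mu>: "len n (\<mu> \<circ> sref j) = len n \<mu> + 1" by (rule L1asc[OF m]) (use \<mu>j B in simp)
        have "(\<exists>l. j < l \<and> l < k \<and> \<tau> k < \<tau> l \<and> \<tau> l < \<tau> j) \<Longrightarrow> (\<exists>l. j+1<l \<and> l<k \<and> \<rho> k < \<rho> l \<and> \<rho> l < \<rho> (j+1))"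
        proof -
          assume "\<exists>l. j < l \<and> l < k \<and> \<tau> k < \<tau> l \<and> \<tau> l < \<tau> j"
          then obtain l where l: "j < l" "l < k" "\<tau> k < \<tau> l" "\<tau> l < \<tau> j" by blast
          then have "l \<noteq> j+1" using B by auto
          then show ?thesis using l \<rho>1 \<rho>2[of l] by (intro exI[of _ l]) auto
        qed
        note H = this
        show ?thesis
        proof (intro conjI impI)
          show "len n (\<tau> \<circ> transpose j k) + 1 \<le> len n \<tau>" using IH1 l\<rho> l\<mu> e by linarith
          assume ex: "\<exists>l. j < l \<and> l < k \<and> \<tau> k < \<tau> l \<and> \<tau> l < \<tau> j"
          have "len n \<mu> + 3 \<le> len n \<rho>" by (rule IH2[OF H[OF ex]])
          then show "len n (\<tau> \<circ> transpose j k) + 3 \<le> len n \<tau>" using l\<rho> l\<mu> e by linarith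
        qed
      next
        case C
        have l\<rho>: "len n \<rho> + 1 = len n \<tau>" unfolding \<rho>_def by (rule L1desc[OF m]) (use C in simp)
        have l\<mu>: "len n (\<mu> \<circ> sref j) + 1 = len n \<mu>" by (rule L1desc[OF m]) (use \<mu>j C in simp)
        show ?thesis using IH1 l\<rho> l\<mu> e by (intro conjI impI) linarith+
      qed
    qed
  qed
qed


lemma move:
  fixes f :: "(nat \<Rightarrow> nat) \<Rightarrow> (nat \<Rightarrow> nat) \<Rightarrow> (nat \<Rightarrow> nat) \<Rightarrow> int"
  assumes cyc: "\<And>u v w r. u permutes {1..n} \<Longrightarrow> v permutes {1..n} \<Longrightarrow> w permutes {1..n}
       \<Longrightarrow> len n u + len n v + len n w + 1 = n choose 2
       \<Longrightarrow> r \<in> {1..n-1} \<Longrightarrow> u r < u (r+1) \<Longrightarrow> v r < v (r+1) \<Longrightarrow> w r < w (r+1)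
       \<Longrightarrow> f (u \<circ> sref r) v w = f u (v \<circ> sref r) w \<and> f u (v \<circ> sref r) w = f u v (w \<circ> sref r)"
    and m: "1 \<le> m" "m < n" "m \<noteq> i" and i: "1 \<le> i" "i < n"
    and pp: "p permutes {1..n}" and sp: "\<sigma> permutes {1..n}"
    and lens: "len n p + len n \<sigma> + 1 = n choose 2"
    and diff: "(p m < p (m+1)) \<noteq> (\<sigma> m < \<sigma> (m+1))"
  shows "f p (sref i) \<sigma> = f (p \<circ> sref m) (sref i) (\<sigma> \<circ> sref m)"
proof -
  have sip: "sref i permutes {1..n}" by (rule sref_perm[OF i])
  have sia: "sref i m < sref i (m+1)" using m by (auto simp: sref_apply)
  have lsi: "len n (sref i) = 1" by (rule len_sref[OF i])
  have mm: "m \<in> {1..n-1}" using m by auto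
  show ?thesis
  proof (cases "p m < p (m+1)")
    case True
    then have sd: "\<sigma> m > \<sigma> (m+1)" using diff perm_neq[OF sp, of m "m+1"] by auto
    define \<sigma>' where "\<sigma>' = \<sigma> \<circ> sref m"
    have s'p: "\<sigma>' permutes {1..n}" unfolding \<sigma>'_def by (rule permutes_compose[OF sref_perm[OF m(1,2)] sp])
    have l': "len n \<sigma>' + 1 = len n \<sigma>" unfolding \<sigma>'_def by (rule L1desc[OF m(1,2) sd])
    have a': "\<sigma>' m < \<sigma>' (m+1)" using sd by (simp add: \<sigma>'_def sref_apply)
    have "f (p \<circ> sref m) (sref i) \<sigma>' = f p (sref i \<circ> sref m) \<sigma>' \<and> f p (sref i \<circ> sref m) \<sigma>' = f p (sref i) (\<sigma>' \<circ> sref m)"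
      by (rule cyc[OF pp sip s'p _ mm True sia a']) (use lens l' lsi in simp)
    moreover have "\<sigma>' \<circ> sref m = \<sigma>" unfolding \<sigma>'_def by simp
    ultimately show ?thesis unfolding \<sigma>'_def by simp
  next
    case False
    then have pd: "p m > p (m+1)" using perm_neq[OF pp, of m "m+1"] by auto
    have sa: "\<sigma> m < \<sigma> (m+1)" using diff False by auto
    define p' where "p' = p \<circ> sref m"
    have p'p: "p' permutes {1..n}" unfolding p'_def by (rule permutes_compose[OF sref_perm[OF m(1,2)] pp])
    have l': "len n p' + 1 = len n p" unfolding p'_def by (rule L1desc[OF m(1,2) pd])
    have a': "p' m < p' (m+1)" using pd by (simp add: p'_def sref_apply)
    have "f (p' \<circ> sref m) (sref i) \<sigma> = f p' (sref i \<circ> sref m) \<sigma> \<and> f p' (sref i \<circ> sref m) \<sigma> = f p' (sref i) (\<sigma> \<circ> sref m)"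
      by (rule cyc[OF p'p sip sp _ mm a' sia sa]) (use lens l' lsi in simp)
    moreover have "p' \<circ> sref m = p" unfolding p'_def by simp
    ultimately show ?thesis unfolding p'_def by simp
  qed
qed


lemma mainM:
  fixes f :: "(nat \<Rightarrow> nat) \<Rightarrow> (nat \<Rightarrow> nat) \<Rightarrow> (nat \<Rightarrow> nat) \<Rightarrow> int"
  assumes cyc: "\<And>u v w r. u permutes {1..n} \<Longrightarrow> v permutes {1..n} \<Longrightarrow> w permutes {1..n}
       \<Longrightarrow> len n u + len n v + len n w + 1 = n choose 2
       \<Longrightarrow> r \<in> {1..n-1} \<Longrightarrow> u r < u (r+1) \<Longrightarrow> v r < v (r+1) \<Longrightarrow> w r < w (r+1)
       \<Longrightarrow> f (u \<circ> sref r) v w = f u (v \<circ> sref r) w \<and> f u (v \<circ> sref r) w = f u v (w \<circ> sref r)"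
    and vanish: "\<And>u v w r. schubert_problem n u v w \<Longrightarrow> r \<in> {1..n-1}
       \<Longrightarrow> u r < u (r+1) \<Longrightarrow> v r < v (r+1) \<Longrightarrow> w r < w (r+1) \<Longrightarrow> f u v w = 0"
    and norm: "f id id (longest n) = 1"
    and i: "1 \<le> i" "i < n"
  shows "\<forall>p j k. p permutes {1..n} \<longrightarrow> 1 \<le> j \<longrightarrow> j < k \<longrightarrow> k \<le> n \<longrightarrow> k - j = d
     \<longrightarrow> Wp n p j > Wp n p k \<longrightarrow> len n (Wp n p \<circ> transpose j k) + 1 = len n (Wp n p)
     \<longrightarrow> f p (sref i) (Wp n p \<circ> transpose j k) = (if j \<le> i \<and> i < k then 1 else 0)"
proof (induction d)
  case 0 show ?case by auto
next
  case (Suc d)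
  show ?case
  proof (intro allI impI)
    fix p j k
    assume pp: "p permutes {1..n}" and j: "1 \<le> j" and jk: "j < k" and kn: "k \<le> n"
      and dd: "k - j = Suc d" and tjk: "Wp n p j > Wp n p k"
      and ls: "len n (Wp n p \<circ> transpose j k) + 1 = len n (Wp n p)"
    define \<tau> where "\<tau> = Wp n p"
    define \<sigma> where "\<sigma> = \<tau> \<circ> transpose j k"
    have tp: "\<tau> permutes {1..n}" unfolding \<tau>_def by (rule Wp_perm[OF pp])
    have sp: "\<sigma> permutes {1..n}" unfolding \<sigma>_def
      by (rule permutes_compose[OF permutes_swap_id tp]) (use j jk kn in auto)
    have L3p: "len n p + len n \<tau> = n choose 2" unfolding \<tau>_def by (rule L3[OF pp])
    have lens: "len n p + len n \<sigma> + 1 = n choose 2" using L3p ls unfolding \<sigma>_def \<tau>_def by simp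
    have tjk': "\<tau> j > \<tau> k" using tjk by (simp add: \<tau>_def)
    have ls': "len n \<sigma> + 1 = len n \<tau>" using ls by (simp add: \<sigma>_def \<tau>_def)
    have pl: "\<And>a b. a \<in> {1..n} \<Longrightarrow> b \<in> {1..n} \<Longrightarrow> (p a < p b) = (\<tau> a > \<tau> b)"
      unfolding \<tau>_def using Wp_less[OF pp] by simp
    have L2i: "(\<exists>l. j < l \<and> l < k \<and> \<tau> k < \<tau> l \<and> \<tau> l < \<tau> j) \<Longrightarrow> False"
    proof -
      assume ex: "\<exists>l. j < l \<and> l < k \<and> \<tau> k < \<tau> l \<and> \<tau> l < \<tau> j"
      have "len n (\<tau> \<circ> transpose j k) + 3 \<le> len n \<tau>"
        using L2[of n "k - j", rule_format, OF tp j jk kn refl tjk'] ex by blast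
      then show False using ls' unfolding \<sigma>_def by simp
    qed
    have main: "f p (sref i) \<sigma> = (if j \<le> i \<and> i < k then 1 else 0)"
    proof (cases "k = j + 1")
      case True
      have jm: "1 \<le> j" "j < n" using j jk kn by auto
      have se: "\<sigma> = \<tau> \<circ> sref j" unfolding \<sigma>_def True sref_def by simp
      have sa: "\<sigma> j < \<sigma> (j+1)" using tjk' True by (simp add: se sref_apply)
      have pa: "p j < p (j+1)" using pl[of j "j+1"] tjk' True jm by auto
      show ?thesis
      proof (cases "j = i")
        case ji: True
        have "f (p \<circ> sref i) id \<sigma> = f p (id \<circ> sref i) \<sigma> \<and> f p (id \<circ> sref i) \<sigma> = f p id (\<sigma> \<circ> sref i)"
          by (rule cyc[OF pp permutes_id sp]) (use lens len_id[of n] jm pa sa ji in auto)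
        then have "f p (sref i) \<sigma> = f p id \<tau>" using se ji by simp
        also have "\<dots> = 1" unfolding \<tau>_def by (rule claimA[OF cyc norm refl pp])
        finally have "f p (sref i) \<sigma> = 1" .
        then show ?thesis using ji True by simp
      next
        case False
        have "f p (sref i) \<sigma> = 0"
        proof (rule vanish[of p "sref i" \<sigma> j])
          show "schubert_problem n p (sref i) \<sigma>" unfolding schubert_problem_def
            using pp sref_perm[OF i] sp lens len_sref[OF i] by simp
          show "j \<in> {1..n-1}" using jm by auto
          show "p j < p (j+1)" by (rule pa)
          show "sref i j < sref i (j+1)" using False by (auto simp: sref_apply)
          show "\<sigma> j < \<sigma> (j+1)" by (rule sa)
        qed
        then show ?thesis using False True by simp
      qed
    next
      case False
      then have jk2: "j + 1 < k" using jk by simp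
      show ?thesis
      proof (cases "j = i")
        case False
        have m: "1 \<le> j" "j < n" "j \<noteq> i" using j jk kn False by auto
        have ne: "\<tau> (j+1) \<noteq> \<tau> j" "\<tau> (j+1) \<noteq> \<tau> k" using perm_neq[OF tp] jk2 by auto
        have sv: "\<sigma> j = \<tau> k" "\<sigma> (j+1) = \<tau> (j+1)" using jk2 by (auto simp: \<sigma>_def transpose_def)
        have nobs: "\<not> (\<tau> k < \<tau> (j+1) \<and> \<tau> (j+1) < \<tau> j)" using L2i jk2 by auto
        have pj: "(p j < p (j+1)) = (\<tau> j > \<tau> (j+1))" using pl[of j "j+1"] m by auto
        have diff: "(p j < p (j+1)) \<noteq> (\<sigma> j < \<sigma> (j+1))" using pj sv ne nobs tjk' by auto
        have mv: "f p (sref i) \<sigma> = f (p \<circ> sref j) (sref i) (\<sigma> \<circ> sref j)"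
          by (rule move[OF cyc m i pp sp lens diff])
        define p' where "p' = p \<circ> sref j"
        have p'p: "p' permutes {1..n}" unfolding p'_def by (rule permutes_compose[OF sref_perm[OF m(1,2)] pp])
        have Wp': "Wp n p' = \<tau> \<circ> sref j" unfolding p'_def \<tau>_def by (rule Wp_comp[OF m(1,2)])
        have se: "\<sigma> \<circ> sref j = Wp n p' \<circ> transpose (j+1) k" unfolding Wp' \<sigma>_def by (rule C1[OF jk2])
        have t': "Wp n p' (j+1) > Wp n p' k" using Wp' tjk' jk2 by (simp add: sref_apply)
        have l': "len n (Wp n p' \<circ> transpose (j+1) k) + 1 = len n (Wp n p')"
        proof (cases "\<tau> j < \<tau> (j+1)")
          case True
          have "\<sigma> j < \<sigma> (j+1)" using True sv tjk' by simp
          then have "len n (\<sigma> \<circ> sref j) = len n \<sigma> + 1" by (rule L1asc[OF m(1,2)])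
          moreover have "len n (\<tau> \<circ> sref j) = len n \<tau> + 1" by (rule L1asc[OF m(1,2) True])
          ultimately show ?thesis using ls' se Wp' by simp
        next
          case False
          then have td: "\<tau> j > \<tau> (j+1)" using ne by auto
          then have "\<sigma> j > \<sigma> (j+1)" using sv nobs ne by auto
          then have "len n (\<sigma> \<circ> sref j) + 1 = len n \<sigma>" by (rule L1desc[OF m(1,2)])
          moreover have "len n (\<tau> \<circ> sref j) + 1 = len n \<tau>" by (rule L1desc[OF m(1,2) td])
          ultimately show ?thesis using ls' se Wp' by simp
        qed
        have IH: "f p' (sref i) (Wp n p' \<circ> transpose (j+1) k) = (if j+1 \<le> i \<and> i < k then 1 else 0)"
        proof -
          have p1: "1 \<le> j+1" by simp
          have p5: "k - (j+1) = d" using dd by simp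
          show ?thesis by (rule Suc.IH[rule_format, OF p'p p1 jk2 kn p5 t' l'])
        qed
        then show ?thesis using mv se m(3) unfolding p'_def by auto
      next
        case True
        define m where "m = k - 1"
        have mk: "m + 1 = k" "j < m" using jk2 by (auto simp: m_def)
        have m: "1 \<le> m" "m < n" "m \<noteq> i" using j jk2 kn True by (auto simp: m_def)
        have ne: "\<tau> m \<noteq> \<tau> j" "\<tau> m \<noteq> \<tau> k" using perm_neq[OF tp] mk by auto
        have sv: "\<sigma> m = \<tau> m" "\<sigma> (m+1) = \<tau> j" using mk by (auto simp: \<sigma>_def transpose_def)
        have nobs: "\<not> (\<tau> k < \<tau> m \<and> \<tau> m < \<tau> j)" using L2i mk by auto
        have pj: "(p m < p (m+1)) = (\<tau> m > \<tau> (m+1))" using pl[of m "m+1"] m by auto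
        have diff: "(p m < p (m+1)) \<noteq> (\<sigma> m < \<sigma> (m+1))" using pj sv ne nobs tjk' mk by auto
        have mv: "f p (sref i) \<sigma> = f (p \<circ> sref m) (sref i) (\<sigma> \<circ> sref m)"
          by (rule move[OF cyc m i pp sp lens diff])
        define p' where "p' = p \<circ> sref m"
        have p'p: "p' permutes {1..n}" unfolding p'_def by (rule permutes_compose[OF sref_perm[OF m(1,2)] pp])
        have Wp': "Wp n p' = \<tau> \<circ> sref m" unfolding p'_def \<tau>_def by (rule Wp_comp[OF m(1,2)])
        have se: "\<sigma> \<circ> sref m = Wp n p' \<circ> transpose j m" unfolding Wp' \<sigma>_def m_def by (rule C2[OF jk2])
        have t': "Wp n p' j > Wp n p' m" using Wp' tjk' mk by (auto simp: sref_apply)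
        have l': "len n (Wp n p' \<circ> transpose j m) + 1 = len n (Wp n p')"
        proof (cases "\<tau> m < \<tau> (m+1)")
          case True
          have "\<sigma> m < \<sigma> (m+1)" using True sv tjk' mk by simp
          then have "len n (\<sigma> \<circ> sref m) = len n \<sigma> + 1" by (rule L1asc[OF m(1,2)])
          moreover have "len n (\<tau> \<circ> sref m) = len n \<tau> + 1" by (rule L1asc[OF m(1,2) True])
          ultimately show ?thesis using ls' se Wp' by simp
        next
          case False
          then have td: "\<tau> m > \<tau> (m+1)" using ne mk by auto
          then have "\<sigma> m > \<sigma> (m+1)" using sv nobs ne mk by auto
          then have "len n (\<sigma> \<circ> sref m) + 1 = len n \<sigma>" by (rule L1desc[OF m(1,2)])
          moreover have "len n (\<tau> \<circ> sref m) + 1 = len n \<tau>" by (rule L1desc[OF m(1,2) td])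
          ultimately show ?thesis using ls' se Wp' by simp
        qed
        have IH: "f p' (sref i) (Wp n p' \<circ> transpose j m) = (if j \<le> i \<and> i < m then 1 else 0)"
        proof -
          have p4: "m \<le> n" using m by simp
          have p5: "m - j = d" using dd by (simp add: m_def)
          show ?thesis by (rule Suc.IH[rule_format, OF p'p j mk(2) p4 p5 t' l'])
        qed
        then show ?thesis using mv se True mk unfolding p'_def by auto
      qed
    qed
    then show "f p (sref i) (Wp n p \<circ> transpose j k) = (if j \<le> i \<and> i < k then 1 else 0)"
      unfolding \<sigma>_def \<tau>_def .
  qed
qed

theorem theorem1:
  fixes n :: nat and f :: "(nat \<Rightarrow> nat) \<Rightarrow> (nat \<Rightarrow> nat) \<Rightarrow> (nat \<Rightarrow> nat) \<Rightarrow> int"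
  assumes n2: "n \<ge> 2"
    and cyc: "\<And>u v w i. u permutes {1..n} \<Longrightarrow> v permutes {1..n} \<Longrightarrow> w permutes {1..n}
       \<Longrightarrow> len n u + len n v + len n w + 1 = n choose 2
       \<Longrightarrow> i \<in> {1..n-1} \<Longrightarrow> u i < u (i+1) \<Longrightarrow> v i < v (i+1) \<Longrightarrow> w i < w (i+1)
       \<Longrightarrow> f (u \<circ> sref i) v w = f u (v \<circ> sref i) w \<and> f u (v \<circ> sref i) w = f u v (w \<circ> sref i)"
    and vanish: "\<And>u v w i. schubert_problem n u v w \<Longrightarrow> i \<in> {1..n-1}
       \<Longrightarrow> u i < u (i+1) \<Longrightarrow> v i < v (i+1) \<Longrightarrow> w i < w (i+1) \<Longrightarrow> f u v w = 0"
    and norm: "f id id (longest n) = 1"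
    and pi: "\<pi> permutes {1..n}"
    and i: "i \<in> {1..n-1}"
    and tau: "\<tau> = (\<lambda>m. if m \<in> {1..n} then n + 1 - \<pi> m else m)"
    and jk: "j \<in> {1..n}" "k \<in> {1..n}" "j < k" "\<tau> j > \<tau> k"
    and sigma: "\<sigma> = \<tau> \<circ> Transposition.transpose j k"
    and lsig: "len n \<sigma> + 1 = len n \<tau>"
  shows "(j \<le> i \<and> i < k \<longrightarrow> f \<pi> (sref i) \<sigma> = 1)
       \<and> ((j \<le> i \<and> k \<le> i) \<or> (i + 1 \<le> j \<and> i + 1 \<le> k) \<longrightarrow> f \<pi> (sref i) \<sigma> = 0)"
proof -
  have tW: "\<tau> = Wp n \<pi>" unfolding tau Wp_def ..
  have i1: "1 \<le> i" "i < n" using i n2 by auto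
  have j1: "1 \<le> j" and kn: "k \<le> n" using jk by auto
  have tjk: "Wp n \<pi> j > Wp n \<pi> k" using jk(4) tW by simp
  have ls: "len n (Wp n \<pi> \<circ> transpose j k) + 1 = len n (Wp n \<pi>)" using lsig sigma tW by simp
  have M: "f \<pi> (sref i) (Wp n \<pi> \<circ> transpose j k) = (if j \<le> i \<and> i < k then 1 else 0)"
  proof -
    note M0 = mainM[OF cyc vanish norm i1]
    have M1: "\<forall>p j k. p permutes {1..n} \<longrightarrow> 1 \<le> j \<longrightarrow> j < k \<longrightarrow> k \<le> n \<longrightarrow> k - j = (k0 - j0)
     \<longrightarrow> Wp n p j > Wp n p k \<longrightarrow> len n (Wp n p \<circ> transpose j k) + 1 = len n (Wp n p)
     \<longrightarrow> f p (sref i) (Wp n p \<circ> transpose j k) = (if j \<le> i \<and> i < k then 1 else 0)" if "k0 = k" "j0 = j" for k0 j0 by (rule M0)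
    note M2 = M1[OF refl refl, THEN spec, THEN spec, THEN spec, of \<pi> j k]
    show ?thesis using M2 pi j1 jk(3) kn tjk ls by blast
  qed
  then have "f \<pi> (sref i) \<sigma> = (if j \<le> i \<and> i < k then 1 else 0)" using sigma tW by simp
  then show ?thesis by auto
qed

end
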